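(* For every $\beta>0$ there exist $\epsilon_0,\delta_0>0$ such that for any algorithm in $\mathcal{F}$ which finds an $\epsilon$-best arm with success probability at least $1-\delta$, where $\epsilon<\epsilon_0$ and $\delta<\delta_0$, there exists $n_0$ such that if $n>n_0$, the algorithm requires at least $\left(\frac12-\beta\right)\frac{n}{\epsilon^2}\log\frac{1}{\delta}$ queries (samples) on some instance with $n$ arms.
   Context: Setting: a set $A$ of $n$ arms; each arm $a$ has an unknown distribution supported on $[0,1]$ with mean $\mu(a)$; a query (sample) of an arm returns an independent draw from its distribution. An $\epsilon$-best arm is an arm $a$ with $\mu(a)\ge\max_{a'\in A}\mu(a')-\epsilon$; the algorithm must succeed with probability at least $1-\delta$ on every instance. $\log$ is natural. $\mathcal{F}$ is the family of elimination algorithms: such an algorithm maintains a set $S$, initially $S=A$, and repeatedly (i) pulls each arm in $S$ once, (ii) eliminates some of the arms from $S$ (irrevocably, based on the observations so far), and (iii) terminates if $|S|=1$, outputting the remaining arm, and otherwise returns to (i). *)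

theory Defs
  imports "HOL-Probability.Probability"
begin

text \<open>The observation table
omega a t is the t-th sample of arm a (all samples independent); since an
elimination algorithm pulls each surviving arm once per round, the run is a
deterministic function of this table.\<close>

type_synonym elim_rule = "nat \<Rightarrow> (nat \<Rightarrow> real list) \<Rightarrow> nat set"
  \<comment> \<open>given n and the observation history of each arm, the arms to eliminate\<close>

definition valid_instance :: "nat \<Rightarrow> (nat \<Rightarrow> real measure) \<Rightarrow> bool" where
  "valid_instance n nu \<longleftrightarrow>
     (\<forall>a<n. prob_space (nu a) \<and> sets (nu a) = sets borel \<and>
            (AE x in nu a. 0 \<le> x \<and> x \<le> 1))"

definition arm_mean :: "(nat \<Rightarrow> real measure) \<Rightarrow> nat \<Rightarrow> real" where
  "arm_mean nu a = (\<integral>x. x \<partial>(nu a))"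

definition eps_best :: "nat \<Rightarrow> (nat \<Rightarrow> real measure) \<Rightarrow> real \<Rightarrow> nat \<Rightarrow> bool" where
  "eps_best n nu \<epsilon> a \<longleftrightarrow> a < n \<and> (\<forall>a'<n. arm_mean nu a' - \<epsilon> \<le> arm_mean nu a)"

text \<open>State after k rounds: surviving set and number of pulls of each arm.
Round: (i) pull every surviving arm once, (ii) eliminate the arms chosen by
the rule (an elimination of all remaining arms is not allowed and is treated
as eliminating nothing), (iii) stop if exactly one arm remains.\<close>

primrec elim_state :: "elim_rule \<Rightarrow> nat \<Rightarrow> (nat \<Rightarrow> nat \<Rightarrow> real) \<Rightarrow> nat \<Rightarrow> nat set \<times> (nat \<Rightarrow> nat)" where
  "elim_state R n \<omega> 0 = ({..<n}, \<lambda>a. 0)"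
| "elim_state R n \<omega> (Suc k) =
     (let (S, c) = elim_state R n \<omega> k in
      if 0 < k \<and> card S = 1 then (S, c)
      else (let c' = (\<lambda>a. if a \<in> S then Suc (c a) else c a);
                h = (\<lambda>a. map (\<omega> a) [0..<c' a]);
                S' = S - R n h
            in (if S' = {} then S else S', c')))"

definition elim_success :: "elim_rule \<Rightarrow> nat \<Rightarrow> (nat \<Rightarrow> real measure) \<Rightarrow> real \<Rightarrow> (nat \<Rightarrow> nat \<Rightarrow> real) \<Rightarrow> bool" where
  "elim_success R n nu \<epsilon> \<omega> \<longleftrightarrow>
     (\<exists>k>0. \<exists>a. fst (elim_state R n \<omega> k) = {a} \<and> eps_best n nu \<epsilon> a)"

definition num_queries :: "elim_rule \<Rightarrow> nat \<Rightarrow> (nat \<Rightarrow> nat \<Rightarrow> real) \<Rightarrow> ennreal" where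
  "num_queries R n \<omega> = (SUP k. of_nat (\<Sum>a<n. snd (elim_state R n \<omega> k) a))"

definition sample_space :: "nat \<Rightarrow> (nat \<Rightarrow> real measure) \<Rightarrow> (nat \<Rightarrow> nat \<Rightarrow> real) measure" where
  "sample_space n nu = (\<Pi>\<^sub>M a\<in>{..<n}. \<Pi>\<^sub>M t\<in>(UNIV::nat set). nu a)"

definition success_prob :: "elim_rule \<Rightarrow> nat \<Rightarrow> (nat \<Rightarrow> real measure) \<Rightarrow> real \<Rightarrow> real" where
  "success_prob R n nu \<epsilon> =
     measure (sample_space n nu) {\<omega> \<in> space (sample_space n nu). elim_success R n nu \<epsilon> \<omega>}"

definition expected_queries :: "elim_rule \<Rightarrow> nat \<Rightarrow> (nat \<Rightarrow> real measure) \<Rightarrow> ennreal" where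
  "expected_queries R n nu = (\<integral>\<^sup>+ \<omega>. num_queries R n \<omega> \<partial>(sample_space n nu))"

end

theory Submission
  imports Defs "HOL-Probability.Probability"
begin


lemma es_Suc: "elim_state R n \<omega> (Suc k) =
     (let S = fst (elim_state R n \<omega> k); c = snd (elim_state R n \<omega> k) in
      if 0 < k \<and> card S = 1 then (S, c)
      else (let c' = (\<lambda>a. if a \<in> S then Suc (c a) else c a);
                h = (\<lambda>a. map (\<omega> a) [0..<c' a]);
                S' = S - R n h
            in (if S' = {} then S else S', c')))"
  by (simp add: case_prod_beta Let_def)

declare elim_state.simps(2)[simp del]

lemma es_inv: "fst (elim_state R n \<omega> k) \<subseteq> {..<n} \<and> (\<forall>a. a \<ge> n \<longrightarrow> snd (elim_state R n \<omega> k) a = 0)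
   \<and> (\<forall>a. snd (elim_state R n \<omega> k) a \<le> k)"
proof (induction k)
  case 0 then show ?case by simp
next
  case (Suc k)
  let ?S = "fst (elim_state R n \<omega> k)" and ?c = "snd (elim_state R n \<omega> k)"
  have A: "?S \<subseteq> {..<n}" "\<And>a. a \<ge> n \<Longrightarrow> ?c a = 0" "\<And>a. ?c a \<le> k" using Suc.IH by auto
  have B: "a \<in> ?S \<Longrightarrow> a < n" for a using A(1) by auto
  show ?case
  proof (cases "0 < k \<and> card ?S = 1")
    case True
    then show ?thesis using A by (simp add: es_Suc Let_def le_SucI)
  next
    case False
    have "fst (elim_state R n \<omega> (Suc k)) \<subseteq> ?S" by (auto simp: es_Suc Let_def)
    moreover have "snd (elim_state R n \<omega> (Suc k)) = (\<lambda>a. if a \<in> ?S then Suc (?c a) else ?c a)"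
      using False by (auto simp: es_Suc Let_def)
    ultimately show ?thesis using A B
      by (auto simp: le_SucI)
  qed
qed

lemma es_local:
  assumes "\<And>a t. a < n \<Longrightarrow> t < k \<Longrightarrow> \<omega> a t = \<omega>' a t"
  shows "elim_state R n \<omega> k = elim_state R n \<omega>' k"
  using assms
proof (induction k)
  case 0 then show ?case by simp
next
  case (Suc k)
  then have IH: "elim_state R n \<omega> k = elim_state R n \<omega>' k" by auto
  let ?S = "fst (elim_state R n \<omega> k)" and ?c = "snd (elim_state R n \<omega> k)"
  have h: "(\<lambda>a. map (\<omega> a) [0..<(if a \<in> ?S then Suc (?c a) else ?c a)]) =
           (\<lambda>a. map (\<omega>' a) [0..<(if a \<in> ?S then Suc (?c a) else ?c a)])"
  proof
    fix a
    show "map (\<omega> a) [0..<(if a \<in> ?S then Suc (?c a) else ?c a)] =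
           map (\<omega>' a) [0..<(if a \<in> ?S then Suc (?c a) else ?c a)]"
    proof (cases "a < n")
      case True
      have "?c a \<le> k" using es_inv by blast
      then show ?thesis using Suc.prems True by (auto intro!: map_cong)
    next
      case False
      then have "a \<notin> ?S" "?c a = 0" using es_inv[of R n \<omega> k] by auto
      then show ?thesis by simp
    qed
  qed
  show ?case unfolding es_Suc IH[symmetric] Let_def h by simp
qed

lemma es_mono_Suc: "fst (elim_state R n \<omega> (Suc k)) \<subseteq> fst (elim_state R n \<omega> k)"
  by (auto simp: es_Suc Let_def)

lemma es_mono: "k \<le> m \<Longrightarrow> fst (elim_state R n \<omega> m) \<subseteq> fst (elim_state R n \<omega> k)"
proof (induction m)
  case 0 then show ?case by simp
next
  case (Suc m) then show ?case using es_mono_Suc by (metis le_Suc_eq order_refl order_trans)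
qed

lemma es_freeze: "0 < k \<Longrightarrow> card (fst (elim_state R n \<omega> k)) = 1 \<Longrightarrow> k \<le> m \<Longrightarrow>
   elim_state R n \<omega> m = elim_state R n \<omega> k"
proof (induction m)
  case 0 then show ?case by simp
next
  case (Suc m)
  show ?case
  proof (cases "k = Suc m")
    case False
    then have "k \<le> m" using Suc by auto
    with Suc have "elim_state R n \<omega> m = elim_state R n \<omega> k" by auto
    with Suc.prems \<open>k \<le> m\<close> show ?thesis by (auto simp: es_Suc Let_def)
  qed simp
qed

lemma es_count:
  "a \<in> fst (elim_state R n \<omega> k) \<Longrightarrow> 2 \<le> card (fst (elim_state R n \<omega> k)) \<Longrightarrow>
   snd (elim_state R n \<omega> k) a = k"
proof (induction k)
  case 0 then show ?case by simp
next
  case (Suc k)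
  let ?S = "fst (elim_state R n \<omega> k)"
  have sub: "fst (elim_state R n \<omega> (Suc k)) \<subseteq> ?S" by (rule es_mono_Suc)
  have fin: "finite ?S" using es_inv[of R n \<omega> k] finite_subset by blast
  have "a \<in> ?S" using Suc.prems sub by auto
  moreover have "2 \<le> card ?S" using card_mono[OF fin sub] Suc.prems by linarith
  ultimately have "snd (elim_state R n \<omega> k) a = k" using Suc.IH by auto
  then show ?case using \<open>2 \<le> card ?S\<close> \<open>a \<in> ?S\<close> by (auto simp: es_Suc Let_def)
qed

lemma es_count_or:
  assumes "a < n"
  shows "a \<notin> fst (elim_state R n \<omega> k) \<or> fst (elim_state R n \<omega> k) = {a} \<or> snd (elim_state R n \<omega> k) a = k"
proof (cases "a \<in> fst (elim_state R n \<omega> k) \<and> fst (elim_state R n \<omega> k) \<noteq> {a}")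
  case True
  let ?S = "fst (elim_state R n \<omega> k)"
  have fin: "finite ?S" using es_inv[of R n \<omega> k] finite_subset by blast
  from True obtain b where "b \<in> ?S" "b \<noteq> a" by auto
  then have "{a,b} \<subseteq> ?S" using True by auto
  then have "card {a,b} \<le> card ?S" by (rule card_mono[OF fin])
  moreover have "card {a,b} = 2" using \<open>b \<noteq> a\<close> by simp
  ultimately have "2 \<le> card ?S" by simp
  then have "snd (elim_state R n \<omega> k) a = k" using True es_count by metis
  then show ?thesis by simp
next
  case False
  then show ?thesis by auto
qed

lemma es_fail:
  assumes "a \<notin> fst (elim_state R n \<omega> T)"
    and uniq: "\<And>b. eps_best n nu \<epsilon> b \<Longrightarrow> b = a"
  shows "\<not> elim_success R n nu \<epsilon> \<omega>"
proof
  assume "elim_success R n nu \<epsilon> \<omega>"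
  then obtain k b where k: "k > 0" "fst (elim_state R n \<omega> k) = {b}" "eps_best n nu \<epsilon> b"
    unfolding elim_success_def by auto
  then have ba: "b = a" using uniq by auto
  show False
  proof (cases "k \<le> T")
    case True
    have "card (fst (elim_state R n \<omega> k)) = 1" using k(2) by simp
    then have "elim_state R n \<omega> T = elim_state R n \<omega> k" using es_freeze[of k R n \<omega> T] k(1) True by simp
    then have "a \<in> fst (elim_state R n \<omega> T)" using k(2) ba by simp
    then show False using assms(1) by simp
  next
    case False
    then have "fst (elim_state R n \<omega> k) \<subseteq> fst (elim_state R n \<omega> T)" using es_mono[of T k R n \<omega>] by simp
    then have "a \<in> fst (elim_state R n \<omega> T)" using k(2) ba by auto
    then show False using assms(1) by simp
  qed
qed

lemma nq_ge: "of_nat (\<Sum>a<n. snd (elim_state R n \<omega> k) a) \<le> num_queries R n \<omega>"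
  unfolding num_queries_def by (rule SUP_upper) auto


definition bern :: "real \<Rightarrow> real measure" where
  "bern q = distr (measure_pmf (bernoulli_pmf q)) borel (\<lambda>b. if b then 1 else 0)"

lemma bern_sets[simp]: "sets (bern q) = sets borel"
  by (simp add: bern_def)

lemma bern_space[simp]: "space (bern q) = UNIV"
  by (simp add: bern_def)

lemma bern_prob: "prob_space (bern q)"
  unfolding bern_def by (rule prob_space.prob_space_distr) (auto simp: measure_pmf.prob_space_axioms)

lemma bern_single:
  assumes "0 \<le> q" "q \<le> 1" "v \<in> {0,1}"
  shows "emeasure (bern q) {v} = ennreal (if v = 1 then q else 1 - q)"
proof -
  have "emeasure (bern q) {v} = emeasure (measure_pmf (bernoulli_pmf q)) ((\<lambda>b. if b then 1 else 0::real) -` {v})"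
    unfolding bern_def by (subst emeasure_distr) auto
  also have "(\<lambda>b. if b then 1 else 0::real) -` {v} = (if v = 1 then {True} else {False})"
    using assms(3) by (auto split: if_splits)
  finally show ?thesis using assms by (auto simp: emeasure_pmf_single)
qed

lemma bern_AE: "AE x in bern q. 0 \<le> x \<and> x \<le> 1"
  unfolding bern_def by (subst AE_distr_iff) auto

lemma bern_mean:
  assumes "0 \<le> q" "q \<le> 1"
  shows "(\<integral>x. x \<partial>bern q) = q"
  unfolding bern_def using assms by (subst integral_distr) auto

lemma valid_bern:
  assumes "\<And>a. 0 \<le> p a \<and> p a \<le> 1"
  shows "valid_instance n (\<lambda>a. bern (p a))"
  unfolding valid_instance_def using bern_prob bern_AE by auto

lemma mean_bern:
  assumes "\<And>a. 0 \<le> p a \<and> p a \<le> 1"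
  shows "arm_mean (\<lambda>a. bern (p a)) a = p a"
  unfolding arm_mean_def using bern_mean assms by auto

definition cyl :: "nat \<Rightarrow> nat \<Rightarrow> (nat \<Rightarrow> real measure) \<Rightarrow> (nat \<times> nat \<Rightarrow> real) \<Rightarrow> (nat \<Rightarrow> nat \<Rightarrow> real) set" where
  "cyl n T nu \<tau> = {\<omega> \<in> space (sample_space n nu). \<forall>x\<in>{..<n}\<times>{..<T}. \<omega> (fst x) (snd x) = \<tau> x}"

lemma cyl_eq:
  assumes sp: "\<And>a. space (nu a) = UNIV"
  shows "cyl n T nu \<tau> = (\<Pi>\<^sub>E a\<in>{..<n}. prod_emb UNIV (\<lambda>_. nu a) {..<T} (\<Pi>\<^sub>E t\<in>{..<T}. {\<tau> (a,t)}))"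
  unfolding cyl_def sample_space_def
  by (auto simp: space_PiM prod_emb_def PiE_iff sp extensional_def)

lemma cyl_emeasure:
  assumes P: "\<And>a. prob_space (nu a)" and sp: "\<And>a. sets (nu a) = sets borel"
  shows "emeasure (sample_space n nu) (cyl n T nu \<tau>) = (\<Prod>x\<in>{..<n}\<times>{..<T}. emeasure (nu (fst x)) {\<tau> x})"
proof -
  have spu: "\<And>a. space (nu a) = UNIV" using sp sets_eq_imp_space_eq by fastforce
  let ?C = "\<lambda>a. prod_emb UNIV (\<lambda>_. nu a) {..<T} (\<Pi>\<^sub>E t\<in>{..<T}. {\<tau> (a,t)})"
  have Pi: "\<And>a. prob_space (\<Pi>\<^sub>M t\<in>(UNIV::nat set). nu a)" by (rule prob_space_PiM) (use P in auto)
  have Cs: "?C a \<in> sets (\<Pi>\<^sub>M t\<in>(UNIV::nat set). nu a)" for a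
    by (rule sets_PiM_I) (auto simp: sp)
  have Csp: "?C a \<subseteq> space (\<Pi>\<^sub>M t\<in>(UNIV::nat set). nu a)" for a
    using Cs sets.sets_into_space by blast
  have "emeasure (sample_space n nu) (cyl n T nu \<tau>)
      = emeasure (\<Pi>\<^sub>M a\<in>{..<n}. \<Pi>\<^sub>M t\<in>(UNIV::nat set). nu a)
          (prod_emb {..<n} (\<lambda>a. \<Pi>\<^sub>M t\<in>(UNIV::nat set). nu a) {..<n} (\<Pi>\<^sub>E a\<in>{..<n}. ?C a))"
    unfolding cyl_eq[OF spu] sample_space_def
    by (subst prod_emb_PiE_same_index) (use Csp in auto)
  also have "\<dots> = (\<Prod>a<n. emeasure (\<Pi>\<^sub>M t\<in>(UNIV::nat set). nu a) (?C a))"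
    by (rule emeasure_PiM_emb) (use Pi Cs in auto)
  also have "\<dots> = (\<Prod>a<n. \<Prod>t<T. emeasure (nu a) {\<tau> (a,t)})"
    by (rule prod.cong[OF refl], rule emeasure_PiM_emb) (use P sp in auto)
  also have "\<dots> = (\<Prod>x\<in>{..<n}\<times>{..<T}. emeasure (nu (fst x)) {\<tau> x})"
    by (simp add: prod.cartesian_product case_prod_beta)
  finally show ?thesis .
qed

lemma cyl_sets:
  assumes sp: "\<And>a. sets (nu a) = sets borel"
  shows "cyl n T nu \<tau> \<in> sets (sample_space n nu)"
proof -
  have spu: "\<And>a. space (nu a) = UNIV" using sp sets_eq_imp_space_eq by fastforce
  let ?C = "\<lambda>a. prod_emb UNIV (\<lambda>_. nu a) {..<T} (\<Pi>\<^sub>E t\<in>{..<T}. {\<tau> (a,t)})"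
  have Cs: "?C a \<in> sets (\<Pi>\<^sub>M t\<in>(UNIV::nat set). nu a)" for a
    by (rule sets_PiM_I) (auto simp: sp)
  show ?thesis
    unfolding cyl_eq[OF spu] sample_space_def
    by (rule sets_PiM_I_finite) (use Cs in auto)
qed


definition rr :: "real \<Rightarrow> real \<Rightarrow> real" where
  "rr \<gamma> v = (if v = 1 then 1 + 2*\<gamma> else 1 - 2*\<gamma>)"

lemma card_arm: "a < n \<Longrightarrow> card {x \<in> {..<n}\<times>{..<T}. fst x = a} = T"
proof -
  assume "a < n"
  then have "{x \<in> {..<n}\<times>{..<(T::nat)}. fst x = a} = {a}\<times>{..<T}" by auto
  then show ?thesis by (simp add: card_cartesian_product)
qed

lemma prod_if_const:
  assumes "finite I"
  shows "(\<Prod>x\<in>I. if P x then (M::real) else 1) = M ^ card {x\<in>I. P x}"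
  using prod.inter_filter[OF assms, of "\<lambda>_. M" P] by simp

lemma sum_Q:
  fixes lam \<gamma> :: real and n T a :: nat
  assumes "a < n"
  defines "I \<equiv> {..<n}\<times>{..<T}"
  shows "(\<Sum>\<tau>\<in>(\<Pi>\<^sub>E x\<in>I. {0,1}). \<Prod>x\<in>I. (1/2) * (if fst x = a then rr \<gamma> (\<tau> x) powr (-lam) else 1))
       = (((1+2*\<gamma>) powr (-lam) + (1-2*\<gamma>) powr (-lam))/2) ^ T"
proof -
  have fI: "finite I" unfolding I_def by auto
  have "(\<Sum>\<tau>\<in>(\<Pi>\<^sub>E x\<in>I. {0,1}). \<Prod>x\<in>I. (1/2) * (if fst x = a then rr \<gamma> (\<tau> x) powr (-lam) else 1))
      = (\<Prod>x\<in>I. \<Sum>v\<in>{0,1}. (1/2) * (if fst x = a then rr \<gamma> v powr (-lam) else (1::real)))"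
    by (rule prod_sum_PiE[symmetric]) (use fI in auto)
  also have "\<dots> = (\<Prod>x\<in>I. if fst x = a then ((1+2*\<gamma>) powr (-lam) + (1-2*\<gamma>) powr (-lam))/2 else 1)"
    by (rule prod.cong) (auto simp: rr_def field_simps)
  also have "\<dots> = (((1+2*\<gamma>) powr (-lam) + (1-2*\<gamma>) powr (-lam))/2) ^ T"
    using prod_if_const[OF fI] card_arm[OF assms(1)] unfolding I_def by simp
  finally show ?thesis .
qed

lemma rr_pos: "0 < \<gamma> \<Longrightarrow> \<gamma> < 1/2 \<Longrightarrow> rr \<gamma> v > 0"
  by (auto simp: rr_def)

lemma change_measure:
  fixes lam \<gamma> c \<delta> :: real and n T a :: nat and X :: "(nat\<times>nat \<Rightarrow> real) set"
  assumes "a < n" and g: "0 < \<gamma>" "\<gamma> < 1/2" and c: "c > 0" and l: "lam > 0"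
  defines "I \<equiv> {..<n}\<times>{..<T}"
  defines "w0 \<equiv> (1/2::real) ^ card I"
  defines "\<rho> \<equiv> (\<lambda>\<tau>. \<Prod>x\<in>I. if fst x = a then rr \<gamma> (\<tau> x) else 1)"
  assumes X: "X \<subseteq> (\<Pi>\<^sub>E x\<in>I. {0,1})" and Xd: "(\<Sum>\<tau>\<in>X. w0 * \<rho> \<tau>) \<le> \<delta>"
  shows "(\<Sum>\<tau>\<in>X. w0) \<le> c * \<delta> + c powr (-lam) * (((1+2*\<gamma>) powr (-lam) + (1-2*\<gamma>) powr (-lam))/2) ^ T"
proof -
  have fI: "finite I" unfolding I_def by auto
  define Q where "Q \<tau> = (\<Prod>x\<in>I. if fst x = a then rr \<gamma> (\<tau> x) powr (-lam) else 1)" for \<tau>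
  have w0: "w0 > 0" unfolding w0_def by simp
  have rpos: "\<rho> \<tau> > 0" for \<tau> unfolding \<rho>_def by (rule prod_pos) (use rr_pos[OF g] in auto)
  have Qnn: "Q \<tau> \<ge> 0" for \<tau> unfolding Q_def by (rule prod_nonneg) auto
  have rQ: "\<rho> \<tau> powr (-lam) = Q \<tau>" for \<tau>
    unfolding \<rho>_def Q_def prod_powr_distrib by (rule prod.cong) auto
  have pw: "w0 \<le> c * (w0 * \<rho> \<tau>) + c powr (-lam) * (w0 * Q \<tau>)" for \<tau>
  proof (cases "c * \<rho> \<tau> \<ge> 1")
    case True
    then have "w0 * 1 \<le> w0 * (c * \<rho> \<tau>)" using w0 by (intro mult_left_mono) auto
    moreover have "0 \<le> c powr (-lam) * (w0 * Q \<tau>)" using w0 Qnn by auto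
    ultimately show ?thesis by (simp add: algebra_simps)
  next
    case False
    have pos: "0 < c * \<rho> \<tau>" using c rpos by simp
    have "(c * \<rho> \<tau>) powr lam \<le> 1" using False pos l by (simp add: less_eq_real_def powr01_less_one)
    moreover have "(c * \<rho> \<tau>) powr lam > 0" using c rpos[of \<tau>] by simp
    ultimately have "1 \<le> (c * \<rho> \<tau>) powr (-lam)" by (simp add: powr_minus field_simps)
    also have "\<dots> = c powr (-lam) * Q \<tau>" using c rpos by (simp add: powr_mult rQ)
    finally have "w0 * 1 \<le> w0 * (c powr (-lam) * Q \<tau>)" using w0 by (intro mult_left_mono) auto
    moreover have "0 \<le> c * (w0 * \<rho> \<tau>)" using c w0 rpos[of \<tau>] by simp
    ultimately show ?thesis by (simp add: algebra_simps)
  qed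
  have "(\<Sum>\<tau>\<in>X. w0) \<le> (\<Sum>\<tau>\<in>X. c * (w0 * \<rho> \<tau>) + c powr (-lam) * (w0 * Q \<tau>))"
    by (rule sum_mono) (rule pw)
  also have "\<dots> = c * (\<Sum>\<tau>\<in>X. w0 * \<rho> \<tau>) + c powr (-lam) * (\<Sum>\<tau>\<in>X. w0 * Q \<tau>)"
    by (simp add: sum.distrib sum_distrib_left)
  also have "(\<Sum>\<tau>\<in>X. w0 * Q \<tau>) \<le> (\<Sum>\<tau>\<in>(\<Pi>\<^sub>E x\<in>I. {0,1}). w0 * Q \<tau>)"
    by (rule sum_mono2) (use X fI w0 Qnn in \<open>auto simp: finite_PiE\<close>)
  also have "(\<Sum>\<tau>\<in>(\<Pi>\<^sub>E x\<in>I. {0,1}). w0 * Q \<tau>)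
     = (\<Sum>\<tau>\<in>(\<Pi>\<^sub>E x\<in>I. {0,1}). \<Prod>x\<in>I. (1/2) * (if fst x = a then rr \<gamma> (\<tau> x) powr (-lam) else 1))"
    unfolding w0_def Q_def by (intro sum.cong refl) (simp only: prod.distrib prod_constant)
  also have "\<dots> = (((1+2*\<gamma>) powr (-lam) + (1-2*\<gamma>) powr (-lam))/2) ^ T"
    unfolding I_def by (rule sum_Q[OF assms(1)])
  finally have F: "(\<Sum>\<tau>\<in>X. w0) \<le> c * (\<Sum>\<tau>\<in>X. w0 * \<rho> \<tau>) + c powr (-lam) * (((1+2*\<gamma>) powr (-lam) + (1-2*\<gamma>) powr (-lam))/2) ^ T"
    by (simp add: mult_left_mono)
  have "c * (\<Sum>\<tau>\<in>X. w0 * \<rho> \<tau>) \<le> c * \<delta>" using Xd c by (intro mult_left_mono) auto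
  then show ?thesis using F by linarith
qed


lemma M_bound:
  fixes \<gamma> lam :: real
  assumes g: "0 < \<gamma>" "\<gamma> < 1/2" and l: "lam > 0"
  defines "u \<equiv> ln (1+2*\<gamma>) - ln (1-2*\<gamma>)"
  defines "v \<equiv> -(ln (1+2*\<gamma>) + ln (1-2*\<gamma>))"
  shows "((1+2*\<gamma>) powr (-lam) + (1-2*\<gamma>) powr (-lam))/2 \<le> exp (lam * v / 2 + (lam*u)^2/8)"
proof -
  define h where "h = lam * u"
  have "ln (1-2*\<gamma>) < ln (1+2*\<gamma>)" using g by simp
  then have u: "u > 0" unfolding u_def by simp
  then have h: "h \<ge> 0" unfolding h_def using l by simp
  have "-h * (1/2) + ln (1 + (1/2) * (exp h - 1)) \<le> h^2/8"
    by (rule Hoeffdings_lemma_aux) (use h in auto)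
  then have "ln ((1 + exp h)/2) \<le> h / 2 + h^2/8" by (simp add: field_simps)
  then have A: "(1 + exp h)/2 \<le> exp (h / 2 + h^2/8)"
  proof -
    have p: "(1 + exp h)/2 > 0" by (simp add: add_pos_pos)
    have "(1 + exp h)/2 = exp (ln ((1 + exp h)/2))" using p by simp
    also have "\<dots> \<le> exp (h/2 + h^2/8)" using \<open>ln ((1 + exp h)/2) \<le> h/2 + h^2/8\<close> by simp
    finally show ?thesis .
  qed
  have q1: "lam * v / 2 - h / 2 = - lam * ln (1+2*\<gamma>)"
    unfolding h_def u_def v_def by (simp add: field_simps)
  have q2: "lam * v / 2 - h / 2 + h = - lam * ln (1-2*\<gamma>)"
    unfolding h_def u_def v_def by (simp add: field_simps)
  have e1: "(1+2*\<gamma>) powr (-lam) = exp (lam * v / 2 - h / 2)"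
    using g unfolding powr_def q1 by simp
  have e2: "(1-2*\<gamma>) powr (-lam) = exp (lam * v / 2 - h / 2) * exp h"
    using g unfolding powr_def exp_add[symmetric] q2 by simp
  have "((1+2*\<gamma>) powr (-lam) + (1-2*\<gamma>) powr (-lam))/2 = exp (lam * v / 2 - h / 2) * ((1 + exp h)/2)"
    unfolding e1 e2 by (simp add: algebra_simps)
  also have "\<dots> \<le> exp (lam * v / 2 - h / 2) * exp (h / 2 + h^2/8)"
    by (rule mult_left_mono[OF A]) simp
  also have "\<dots> = exp (lam * v / 2 + (lam*u)^2/8)" unfolding h_def by (simp flip: exp_add)
  finally show ?thesis .
qed

lemma uv_bounds:
  fixes \<gamma> :: real
  assumes g: "0 < \<gamma>" "\<gamma> \<le> 1/4"
  defines "u \<equiv> ln (1+2*\<gamma>) - ln (1-2*\<gamma>)"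
  defines "v \<equiv> -(ln (1+2*\<gamma>) + ln (1-2*\<gamma>))"
  shows "0 < u" "u \<le> 6*\<gamma>" "4*\<gamma>^2 \<le> v" "v \<le> 4*\<gamma>^2/(1-4*\<gamma>^2)"
proof -
  have "ln (1-2*\<gamma>) < ln (1+2*\<gamma>)" using g by simp
  then show "0 < u" unfolding u_def by simp
  have l1: "ln (1+2*\<gamma>) \<le> 2*\<gamma>" using ln_le_minus_one[of "1+2*\<gamma>"] g by simp
  have "ln (1/(1-2*\<gamma>)) \<le> 1/(1-2*\<gamma>) - 1" using ln_le_minus_one[of "1/(1-2*\<gamma>)"] g by simp
  moreover have "1/(1-2*\<gamma>) - 1 \<le> 4*\<gamma>" using g by (simp add: field_simps)
  moreover have "ln (1/(1-2*\<gamma>)) = - ln (1-2*\<gamma>)" using g by (simp add: ln_div)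
  ultimately have l2: "- ln (1-2*\<gamma>) \<le> 4*\<gamma>" by linarith
  show "u \<le> 6*\<gamma>" unfolding u_def using l1 l2 by linarith
  have E: "(1-2*\<gamma>)*(1+2*\<gamma>) = 1 - 4*\<gamma>^2" by (simp add: algebra_simps power2_eq_square)
  have "ln ((1-2*\<gamma>)*(1+2*\<gamma>)) = ln (1-2*\<gamma>) + ln (1+2*\<gamma>)"
    by (rule ln_mult_pos) (use g in auto)
  then have "ln (1 - 4*\<gamma>^2) = ln (1-2*\<gamma>) + ln (1+2*\<gamma>)" unfolding E .
  then have vv: "v = - ln (1 - 4*\<gamma>^2)" unfolding v_def by simp
  have "\<gamma>^2 \<le> (1/4)^2" by (rule power_mono) (use g in auto)
  then have "\<gamma>^2 \<le> 1/16" by (simp add: power_divide)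
  then have g2: "4*\<gamma>^2 < 1" by linarith
  have "ln (1 - 4*\<gamma>^2) \<le> - 4*\<gamma>^2" using ln_le_minus_one[of "1 - 4*\<gamma>^2"] g2 by simp
  then show "4*\<gamma>^2 \<le> v" unfolding vv by simp
  have "ln (1/(1-4*\<gamma>^2)) \<le> 1/(1-4*\<gamma>^2) - 1" using ln_le_minus_one[of "1/(1-4*\<gamma>^2)"] g2 by simp
  moreover have "ln (1/(1-4*\<gamma>^2)) = - ln (1-4*\<gamma>^2)" using g2 by (simp add: ln_div)
  moreover have "1/(1-4*\<gamma>^2) - 1 = 4*\<gamma>^2/(1-4*\<gamma>^2)" using g2 by (simp add: field_simps)
  ultimately show "v \<le> 4*\<gamma>^2/(1-4*\<gamma>^2)" unfolding vv by linarith
qed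


lemma param:
  fixes b L \<epsilon> :: real
  assumes b: "0 < b" "b < 1/8" and e: "0 < \<epsilon>" "\<epsilon> < b/4" and L: "L \<ge> 2/b"
  defines "\<gamma> \<equiv> \<epsilon>*(1+b)"
  defines "u \<equiv> ln (1+2*\<gamma>) - ln (1-2*\<gamma>)"
  defines "v \<equiv> -(ln (1+2*\<gamma>) + ln (1-2*\<gamma>))"
  defines "T \<equiv> nat \<lfloor>2*(1-2*b)*L/v\<rfloor>"
  defines "lam \<equiv> 4*b*L/(real T*u^2)"
  shows "\<epsilon> < \<gamma>" "\<gamma> \<le> 1/4" "0 < \<gamma>" "real T \<ge> (1-6*b)*(L/(2*\<epsilon>^2))" "T \<ge> 1" "lam > 0"
    "-lam*((1-b)*L) + real T*(lam * v / 2 + (lam*u)^2/8) \<le> -(b^2*L/9)"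
proof -
  show g1: "\<epsilon> < \<gamma>" unfolding \<gamma>_def using b e by (simp add: algebra_simps)
  have g2: "\<gamma> \<le> 2*\<epsilon>" unfolding \<gamma>_def using b e by (simp add: algebra_simps)
  show g3: "\<gamma> \<le> 1/4" using g2 e b by linarith
  show g0: "0 < \<gamma>" using g1 e by linarith
  note uv = uv_bounds[OF g0 g3, folded u_def v_def]
  have Lp: "L > 0" using L b by (smt (verit) divide_pos_pos)
  have v0: "v > 0" using uv(3) g0 by (smt (verit) zero_less_power mult_pos_pos)
  have gg: "4*\<gamma>^2 \<le> b^2" proof -
    have "\<gamma>^2 \<le> (b/2)^2" by (rule power_mono) (use g2 e g0 in auto)
    then show ?thesis by (simp add: power_divide)
  qed
  have bb: "b^2 \<le> b/8" using b by (simp add: power2_eq_square)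
  have g4: "4*\<gamma>^2 \<le> b" using gg bb b by linarith
  have g4': "1 - 4*\<gamma>^2 > 0" using g4 b by linarith
  define Tr where "Tr = 2*(1-2*b)*L/v"
  have T1: "real T \<ge> Tr - 1" unfolding T_def Tr_def by linarith
  have T2: "real T \<le> Tr" unfolding T_def Tr_def using b Lp v0 by (simp add: of_nat_nat)
  have "Tr \<ge> 2*(1-2*b)*L/(4*\<gamma>^2/(1-4*\<gamma>^2))" unfolding Tr_def
    by (rule divide_left_mono) (use uv v0 b Lp g4' in auto)
  also have "2*(1-2*b)*L/(4*\<gamma>^2/(1-4*\<gamma>^2)) = (1-2*b)*(1-4*\<gamma>^2)*L/(2*\<gamma>^2)"
    using g0 g4' by (simp add: field_simps)
  also have "\<dots> \<ge> (1-2*b)*(1-b)*L/(2*\<gamma>^2)"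
    by (intro divide_right_mono mult_right_mono mult_left_mono) (use g4 b Lp g0 in auto)
  also have "(1-2*b)*(1-b)*L/(2*\<gamma>^2) = ((1-2*b)*(1-b)/(1+b)^2) * (L/(2*\<epsilon>^2))"
    unfolding \<gamma>_def using b e by (simp add: field_simps power2_eq_square)
  finally have Tr0: "Tr \<ge> ((1-2*b)*(1-b)/(1+b)^2) * (L/(2*\<epsilon>^2))" .
  have "((1-2*b)*(1-b)/(1+b)^2) \<ge> 1 - 5*b"
  proof -
    have "(1-5*b)*(1+b)^2 \<le> (1-2*b)*(1-b)" using b by (simp add: algebra_simps power2_eq_square power3_eq_cube)
    then show ?thesis using b by (simp add: field_simps)
  qed
  then have "(1 - 5*b) * (L/(2*\<epsilon>^2)) \<le> ((1-2*b)*(1-b)/(1+b)^2) * (L/(2*\<epsilon>^2))"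
    using Lp by (intro mult_right_mono) auto
  then have Tr1: "Tr \<ge> (1 - 5*b) * (L/(2*\<epsilon>^2))" using Tr0 by linarith
  have A: "L/(2*\<epsilon>^2) \<ge> 1/b"
  proof -
    have "\<epsilon>^2 \<le> (b/4)^2" by (rule power_mono) (use e in auto)
    then have "2*\<epsilon>^2 \<le> b^2/8" by (simp add: power_divide)
    also have "\<dots> \<le> b/64" using bb by simp
    finally have "2*\<epsilon>^2 \<le> b/64" .
    then have L64: "L/(2*\<epsilon>^2) \<ge> L/(b/64)" using e Lp by (intro divide_left_mono) auto
    have "2/b \<ge> 1" using b by (simp add: field_simps)
    then have "L \<ge> 1" using L by linarith
    then have "L/(b/64) \<ge> 1/b" using b by (simp add: field_simps)
    then show ?thesis using L64 by linarith
  qed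
  then have "b * (L/(2*\<epsilon>^2)) \<ge> 1" using b by (simp add: field_simps)
  moreover have "(1-6*b)*(L/(2*\<epsilon>^2)) = (1-5*b)*(L/(2*\<epsilon>^2)) - b*(L/(2*\<epsilon>^2))"
    by (simp only: left_diff_distrib)
  ultimately show T3: "real T \<ge> (1-6*b)*(L/(2*\<epsilon>^2))" using T1 Tr1 by linarith
  have "(1-6*b)*(L/(2*\<epsilon>^2)) > 0" using b e Lp by simp
  then have Tp: "real T > 0" using T3 by linarith
  then show T4: "T \<ge> 1" by simp
  show l0: "lam > 0" unfolding lam_def using b Lp Tp uv(1) by simp
  have Tv: "real T * v / 2 \<le> (1-2*b)*L" using T2 v0 unfolding Tr_def by (simp add: field_simps)
  have s1: "real T*((lam*u)^2/8) = lam*(b*L/2)"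
    unfolding lam_def using Tp uv(1) by (simp add: field_simps power2_eq_square)
  have s2: "real T*(lam * v / 2) \<le> lam*((1-2*b)*L)"
    using mult_left_mono[OF Tv, of lam] l0 by (simp add: algebra_simps)
  have s3: "-lam*((1-b)*L) + real T*(lam * v / 2 + (lam*u)^2/8) \<le> - (lam*(b*L/2))"
    using s1 s2 by (simp add: algebra_simps)
  have "real T * u^2 \<le> Tr * u^2" using T2 by (simp add: mult_right_mono)
  also have "Tr * u^2 = 2*(1-2*b)*L * (u^2/v)" unfolding Tr_def by simp
  also have "u^2/v \<le> (6*\<gamma>)^2/(4*\<gamma>^2)"
    by (intro frac_le power_mono) (use uv g0 in auto)
  then have "2*(1-2*b)*L * (u^2/v) \<le> 2*(1-2*b)*L * ((6*\<gamma>)^2/(4*\<gamma>^2))"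
    using b Lp by (intro mult_left_mono) auto
  also have "2*(1-2*b)*L * ((6*\<gamma>)^2/(4*\<gamma>^2)) = 18*(1-2*b)*L" using g0 by (simp add: power2_eq_square)
  also have "\<dots> \<le> 18*L" using b Lp by simp
  finally have Tu: "real T * u^2 \<le> 18*L" .
  have "lam*(b*L/2) = 2*b^2*L^2/(real T * u^2)" unfolding lam_def by (simp add: field_simps power2_eq_square)
  also have "\<dots> \<ge> 2*b^2*L^2/(18*L)"
    by (rule divide_left_mono[OF Tu]) (use b Lp Tp uv(1) in auto)
  also have "2*b^2*L^2/(18*L) = b^2*L/9" using Lp by (simp add: field_simps power2_eq_square)
  finally show "-lam*((1-b)*L) + real T*(lam * v / 2 + (lam*u)^2/8) \<le> -(b^2*L/9)" using s3 by linarith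
qed


definition II :: "nat \<Rightarrow> nat \<Rightarrow> (nat \<times> nat) set" where "II n T = {..<n} \<times> {..<T}"
definition Tab :: "nat \<Rightarrow> nat \<Rightarrow> (nat \<times> nat \<Rightarrow> real) set" where "Tab n T = (\<Pi>\<^sub>E x\<in>II n T. {0,1})"
definition trunc :: "nat \<Rightarrow> nat \<Rightarrow> (nat \<Rightarrow> nat \<Rightarrow> real) \<Rightarrow> (nat \<times> nat \<Rightarrow> real)" where
  "trunc n T \<omega> = restrict (\<lambda>x. \<omega> (fst x) (snd x)) (II n T)"
definition ext :: "(nat \<times> nat \<Rightarrow> real) \<Rightarrow> nat \<Rightarrow> nat \<Rightarrow> real" where "ext \<tau> = (\<lambda>a t. \<tau> (a,t))"
definition wt :: "nat \<Rightarrow> nat \<Rightarrow> (nat \<Rightarrow> real) \<Rightarrow> (nat \<times> nat \<Rightarrow> real) \<Rightarrow> real" where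
  "wt n T p \<tau> = (\<Prod>x\<in>II n T. if \<tau> x = 1 then p (fst x) else 1 - p (fst x))"

lemma finite_II[simp]: "finite (II n T)" by (simp add: II_def)
lemma finite_Tab[simp]: "finite (Tab n T)" by (simp add: Tab_def finite_PiE)

lemma state_trunc: "elim_state R n \<omega> T = elim_state R n (ext (trunc n T \<omega>)) T"
  by (rule es_local) (auto simp: ext_def trunc_def II_def)

lemma trunc_eq:
  assumes "\<tau> \<in> Tab n T"
  shows "trunc n T \<omega> = \<tau> \<longleftrightarrow> (\<forall>x\<in>II n T. \<omega> (fst x) (snd x) = \<tau> x)"
proof (rule iffI)
  assume "trunc n T \<omega> = \<tau>"
  then show "\<forall>x\<in>II n T. \<omega> (fst x) (snd x) = \<tau> x" unfolding trunc_def by auto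
next
  assume H: "\<forall>x\<in>II n T. \<omega> (fst x) (snd x) = \<tau> x"
  show "trunc n T \<omega> = \<tau>"
  proof (rule ext)
    fix x show "trunc n T \<omega> x = \<tau> x"
    proof (cases "x \<in> II n T")
      case True then show ?thesis using H unfolding trunc_def by simp
    next
      case False
      have "\<tau> x = undefined" using assms False unfolding Tab_def by (rule PiE_arb)
      moreover have "trunc n T \<omega> x = undefined" using False unfolding trunc_def by simp
      ultimately show ?thesis by simp
    qed
  qed
qed

lemma cyl_mem:
  assumes "\<tau> \<in> Tab n T"
  shows "\<omega> \<in> cyl n T nu \<tau> \<longleftrightarrow> \<omega> \<in> space (sample_space n nu) \<and> trunc n T \<omega> = \<tau>"
  by (simp only: cyl_def mem_Collect_eq trunc_eq[OF assms] II_def)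

lemma ev_eq:
  assumes "X \<subseteq> Tab n T"
  shows "{\<omega> \<in> space (sample_space n nu). trunc n T \<omega> \<in> X} = (\<Union>\<tau>\<in>X. cyl n T nu \<tau>)"
proof (rule equalityI; rule subsetI)
  fix \<omega> assume "\<omega> \<in> {\<omega> \<in> space (sample_space n nu). trunc n T \<omega> \<in> X}"
  then have 1: "\<omega> \<in> space (sample_space n nu)" "trunc n T \<omega> \<in> X" by auto
  then have "\<omega> \<in> cyl n T nu (trunc n T \<omega>)" using cyl_mem[of "trunc n T \<omega>" n T \<omega> nu] assms by auto
  then show "\<omega> \<in> (\<Union>\<tau>\<in>X. cyl n T nu \<tau>)" using 1 by auto
next
  fix \<omega> assume "\<omega> \<in> (\<Union>\<tau>\<in>X. cyl n T nu \<tau>)"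
  then obtain \<tau> where "\<tau> \<in> X" "\<omega> \<in> cyl n T nu \<tau>" by auto
  then have "\<omega> \<in> space (sample_space n nu)" "trunc n T \<omega> = \<tau>" using cyl_mem[of \<tau> n T \<omega> nu] assms by auto
  then show "\<omega> \<in> {\<omega> \<in> space (sample_space n nu). trunc n T \<omega> \<in> X}" using \<open>\<tau> \<in> X\<close> by auto
qed

lemma cyl_disj:
  assumes "\<tau> \<in> Tab n T" "\<tau>' \<in> Tab n T" "\<tau> \<noteq> \<tau>'"
  shows "cyl n T nu \<tau> \<inter> cyl n T nu \<tau>' = {}"
proof -
  obtain x where "x \<in> II n T" "\<tau> x \<noteq> \<tau>' x"
    using assms unfolding Tab_def by (metis PiE_ext)
  then show ?thesis unfolding cyl_def II_def by auto
qed

lemma ev_meas: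
  assumes p: "\<And>a. 0 \<le> p a \<and> p a \<le> 1" and X: "X \<subseteq> Tab n T"
  defines "SS \<equiv> sample_space n (\<lambda>a. bern (p a))"
  shows "{\<omega> \<in> space SS. trunc n T \<omega> \<in> X} \<in> sets SS"
    "emeasure SS {\<omega> \<in> space SS. trunc n T \<omega> \<in> X} = ennreal (\<Sum>\<tau>\<in>X. wt n T p \<tau>)"
    "measure SS {\<omega> \<in> space SS. trunc n T \<omega> \<in> X} = (\<Sum>\<tau>\<in>X. wt n T p \<tau>)"
proof -
  have fX: "finite X" using X finite_subset finite_Tab by blast
  have cs: "cyl n T (\<lambda>a. bern (p a)) \<tau> \<in> sets SS" for \<tau>
    unfolding SS_def by (rule cyl_sets) simp
  show S: "{\<omega> \<in> space SS. trunc n T \<omega> \<in> X} \<in> sets SS"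
    unfolding SS_def ev_eq[OF X] using fX cs[unfolded SS_def] by auto
  have wnn: "0 \<le> wt n T p \<tau>" for \<tau> unfolding wt_def by (rule prod_nonneg) (use p in auto)
  have ce: "emeasure SS (cyl n T (\<lambda>a. bern (p a)) \<tau>) = ennreal (wt n T p \<tau>)" if "\<tau> \<in> Tab n T" for \<tau>
  proof -
    have "emeasure SS (cyl n T (\<lambda>a. bern (p a)) \<tau>) = (\<Prod>x\<in>{..<n}\<times>{..<T}. emeasure (bern (p (fst x))) {\<tau> x})"
      unfolding SS_def by (rule cyl_emeasure) (auto simp: bern_prob)
    also have "\<dots> = (\<Prod>x\<in>II n T. ennreal (if \<tau> x = 1 then p (fst x) else 1 - p (fst x)))"
      unfolding II_def[symmetric]
      by (rule prod.cong[OF refl], rule bern_single) (use p that in \<open>auto simp: Tab_def PiE_iff\<close>)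
    also have "\<dots> = ennreal (wt n T p \<tau>)" unfolding wt_def
      by (rule prod_ennreal) (use p in auto)
    finally show ?thesis .
  qed
  have "emeasure SS {\<omega> \<in> space SS. trunc n T \<omega> \<in> X} = emeasure SS (\<Union>\<tau>\<in>X. cyl n T (\<lambda>a. bern (p a)) \<tau>)"
    unfolding SS_def ev_eq[OF X] ..
  also have "\<dots> = (\<Sum>\<tau>\<in>X. emeasure SS (cyl n T (\<lambda>a. bern (p a)) \<tau>))"
  proof (rule sum_emeasure[symmetric])
    show "disjoint_family_on (cyl n T (\<lambda>a. bern (p a))) X"
      unfolding disjoint_family_on_def
    proof (intro ballI impI)
      fix m m' assume "m \<in> X" "m' \<in> X" "m \<noteq> m'"
      then show "cyl n T (\<lambda>a. bern (p a)) m \<inter> cyl n T (\<lambda>a. bern (p a)) m' = {}"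
        using cyl_disj[of m n T m'] X by blast
    qed
  qed (use cs fX in auto)
  also have "\<dots> = (\<Sum>\<tau>\<in>X. ennreal (wt n T p \<tau>))" using ce X by (auto intro!: sum.cong)
  also have "\<dots> = ennreal (\<Sum>\<tau>\<in>X. wt n T p \<tau>)" by (rule sum_ennreal) (use wnn in auto)
  finally show E: "emeasure SS {\<omega> \<in> space SS. trunc n T \<omega> \<in> X} = ennreal (\<Sum>\<tau>\<in>X. wt n T p \<tau>)" .
  show "measure SS {\<omega> \<in> space SS. trunc n T \<omega> \<in> X} = (\<Sum>\<tau>\<in>X. wt n T p \<tau>)"
    unfolding measure_def E using wnn by (simp add: sum_nonneg)
qed

lemma card_Tab: "card (Tab n T) = 2 ^ card (II n T)"
  unfolding Tab_def by (simp add: card_PiE numeral_2_eq_2)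

lemma wt_half: "wt n T (\<lambda>_. 1/2) \<tau> = (1/2) ^ card (II n T)"
  unfolding wt_def by (rule trans[OF prod.cong[OF refl] prod_constant]) auto

lemma wt_a: "wt n T (\<lambda>b. if b = a then 1/2 + \<gamma> else 1/2) \<tau>
   = (1/2) ^ card (II n T) * (\<Prod>x\<in>II n T. if fst x = a then rr \<gamma> (\<tau> x) else 1)"
  unfolding wt_def prod_constant[symmetric] prod.distrib[symmetric]
  by (rule prod.cong) (auto simp: rr_def)


definition pa :: "nat \<Rightarrow> real \<Rightarrow> nat \<Rightarrow> real" where
  "pa a \<gamma> = (\<lambda>b. if b = a then 1/2 + \<gamma> else 1/2)"

lemma pa_range: "0 < \<gamma> \<Longrightarrow> \<gamma> < 1/2 \<Longrightarrow> 0 \<le> pa a \<gamma> b \<and> pa a \<gamma> b \<le> 1"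
  by (auto simp: pa_def)

lemma ss_prob: "(\<And>a. prob_space (nu a)) \<Longrightarrow> prob_space (sample_space n nu)"
  unfolding sample_space_def by (intro prob_space_PiM) auto

lemma succ_bound:
  assumes a: "a < n" and e: "0 < \<epsilon>" "\<epsilon> < \<gamma>" "\<gamma> < 1/2" and d: "\<delta> < 1"
    and hyp: "success_prob R n (\<lambda>b. bern (pa a \<gamma> b)) \<epsilon> \<ge> 1 - \<delta>"
  shows "(\<Sum>\<tau>\<in>{\<tau>\<in>Tab n T. a \<notin> fst (elim_state R n (ext \<tau>) T)}. wt n T (pa a \<gamma>) \<tau>) \<le> \<delta>"
proof -
  define nu where "nu = (\<lambda>b. bern (pa a \<gamma> b))"
  define SS where "SS = sample_space n nu"
  define Ea where "Ea = {\<tau>\<in>Tab n T. a \<notin> fst (elim_state R n (ext \<tau>) T)}"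
  define Succ where "Succ = {\<omega> \<in> space SS. elim_success R n nu \<epsilon> \<omega>}"
  define Ev where "Ev = {\<omega> \<in> space SS. trunc n T \<omega> \<in> Ea}"
  have g0: "0 < \<gamma>" using e by linarith
  have pr: "\<And>b. 0 \<le> pa a \<gamma> b \<and> pa a \<gamma> b \<le> 1" using pa_range[OF g0 e(3)] by blast
  interpret P: prob_space SS unfolding SS_def nu_def by (rule ss_prob) (rule bern_prob)
  have sp: "success_prob R n nu \<epsilon> = measure SS Succ"
    unfolding success_prob_def SS_def Succ_def ..
  have Succ_sets: "Succ \<in> sets SS"
  proof (rule ccontr)
    assume "Succ \<notin> sets SS"
    then have "measure SS Succ = 0" by (rule measure_notin_sets)
    then show False using hyp d sp unfolding nu_def by simp
  qed
  have EaT: "Ea \<subseteq> Tab n T" unfolding Ea_def by auto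
  have Ev_sets: "Ev \<in> sets SS" and Ev_m: "measure SS Ev = (\<Sum>\<tau>\<in>Ea. wt n T (pa a \<gamma>) \<tau>)"
    using ev_meas[OF pr EaT] unfolding Ev_def SS_def nu_def by auto
  have uniq: "b = a" if "eps_best n nu \<epsilon> b" for b
  proof (rule ccontr)
    assume "b \<noteq> a"
    have "arm_mean nu a - \<epsilon> \<le> arm_mean nu b" using that a unfolding eps_best_def by auto
    moreover have "arm_mean nu a = 1/2 + \<gamma>" "arm_mean nu b = 1/2"
      unfolding nu_def using mean_bern[OF pr] \<open>b \<noteq> a\<close> by (auto simp: pa_def)
    ultimately show False using e by linarith
  qed
  have disj: "Ev \<inter> Succ = {}"
  proof (rule equals0I)
    fix \<omega> assume "\<omega> \<in> Ev \<inter> Succ"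
    then have "trunc n T \<omega> \<in> Ea" "elim_success R n nu \<epsilon> \<omega>" unfolding Ev_def Succ_def by auto
    then have "a \<notin> fst (elim_state R n \<omega> T)" unfolding Ea_def using state_trunc[of R n \<omega> T] by auto
    then have "\<not> elim_success R n nu \<epsilon> \<omega>" by (rule es_fail) (rule uniq)
    then show False using \<open>elim_success R n nu \<epsilon> \<omega>\<close> by simp
  qed
  have "measure SS Ev + measure SS Succ = measure SS (Ev \<union> Succ)"
    by (rule P.finite_measure_Union[symmetric]) (use Ev_sets Succ_sets disj in auto)
  also have "\<dots> \<le> 1" by (rule P.prob_le_1)
  finally have "measure SS Ev \<le> \<delta>" using hyp sp unfolding nu_def by linarith
  then show ?thesis using Ev_m unfolding Ea_def by simp
qed

lemma expect_bound:
  fixes R n T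
  defines "Ga \<equiv> \<lambda>a. {\<tau>\<in>Tab n T. snd (elim_state R n (ext \<tau>) T) a = T}"
  shows "ennreal (real T * (\<Sum>a<n. \<Sum>\<tau>\<in>Ga a. wt n T (\<lambda>_. 1/2) \<tau>))
          \<le> expected_queries R n (\<lambda>a. bern ((\<lambda>_. 1/2) a))"
proof -
  define p0 where "p0 = (\<lambda>_::nat. 1/2::real)"
  define SS where "SS = sample_space n (\<lambda>a. bern (p0 a))"
  define ev where "ev a = {\<omega> \<in> space SS. trunc n T \<omega> \<in> Ga a}" for a
  define g where "g \<omega> = (\<Sum>a<n. ennreal (real T) * indicator (ev a) \<omega>)" for \<omega>
  have pr: "\<And>a. 0 \<le> p0 a \<and> p0 a \<le> 1" unfolding p0_def by simp
  have GT: "Ga a \<subseteq> Tab n T" for a unfolding Ga_def by auto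
  have evs: "ev a \<in> sets SS" and evm: "emeasure SS (ev a) = ennreal (\<Sum>\<tau>\<in>Ga a. wt n T p0 \<tau>)" for a
    using ev_meas[OF pr GT] unfolding ev_def SS_def by auto
  have wnn: "0 \<le> (\<Sum>\<tau>\<in>Ga a. wt n T p0 \<tau>)" for a
    unfolding wt_def p0_def by (intro sum_nonneg prod_nonneg) auto
  have pt: "g \<omega> \<le> num_queries R n \<omega>" for \<omega>
  proof -
    have "ennreal (real T) * indicator (ev a) \<omega> \<le> of_nat (snd (elim_state R n \<omega> T) a)" for a
    proof (cases "\<omega> \<in> ev a")
      case True
      then have "snd (elim_state R n \<omega> T) a = T"
        unfolding ev_def Ga_def using state_trunc[of R n \<omega> T] by auto
      then show ?thesis using True by (simp add: ennreal_of_nat_eq_real_of_nat)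
    qed simp
    then have "g \<omega> \<le> (\<Sum>a<n. of_nat (snd (elim_state R n \<omega> T) a))"
      unfolding g_def by (rule sum_mono)
    also have "\<dots> = of_nat (\<Sum>a<n. snd (elim_state R n \<omega> T) a)" by simp
    also have "\<dots> \<le> num_queries R n \<omega>" by (rule nq_ge)
    finally show ?thesis .
  qed
  have "integral\<^sup>N SS g = (\<Sum>a<n. integral\<^sup>N SS (\<lambda>\<omega>. ennreal (real T) * indicator (ev a) \<omega>))"
    unfolding g_def by (rule nn_integral_sum) (use evs in auto)
  also have "\<dots> = (\<Sum>a<n. ennreal (real T) * emeasure SS (ev a))"
    by (rule sum.cong[OF refl], rule nn_integral_cmult_indicator) (use evs in auto)
  also have "\<dots> = (\<Sum>a<n. ennreal (real T * (\<Sum>\<tau>\<in>Ga a. wt n T p0 \<tau>)))"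
    using evm wnn by (simp add: ennreal_mult)
  also have "\<dots> = ennreal (\<Sum>a<n. real T * (\<Sum>\<tau>\<in>Ga a. wt n T p0 \<tau>))"
    by (rule sum_ennreal) (use wnn in auto)
  also have "\<dots> = ennreal (real T * (\<Sum>a<n. \<Sum>\<tau>\<in>Ga a. wt n T p0 \<tau>))"
    by (simp add: sum_distrib_left)
  finally have I: "integral\<^sup>N SS g = ennreal (real T * (\<Sum>a<n. \<Sum>\<tau>\<in>Ga a. wt n T p0 \<tau>))" .
  have "integral\<^sup>N SS g \<le> integral\<^sup>N SS (num_queries R n)"
    by (rule nn_integral_mono) (rule pt)
  then show ?thesis using I unfolding expected_queries_def SS_def p0_def by simp
qed

lemma comb_bound:
  fixes R n T
  defines "Ga \<equiv> \<lambda>a. {\<tau>\<in>Tab n T. snd (elim_state R n (ext \<tau>) T) a = T}"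
  defines "Ea \<equiv> \<lambda>a. {\<tau>\<in>Tab n T. a \<notin> fst (elim_state R n (ext \<tau>) T)}"
  defines "w0 \<equiv> (1/2::real) ^ card (II n T)"
  shows "(\<Sum>a<n. w0 * real (card (Ga a))) \<ge> real n - (\<Sum>a<n. w0 * real (card (Ea a))) - 1"
proof -
  define Ha where "Ha a = {\<tau>\<in>Tab n T. fst (elim_state R n (ext \<tau>) T) = {a}}" for a
  have w0c: "w0 * real (card (Tab n T)) = 1" unfolding w0_def card_Tab
    by (simp add: power_one_over[symmetric] power_mult_distrib[symmetric])
  have each: "real (card (Tab n T)) \<le> real (card (Ga a)) + real (card (Ea a)) + real (card (Ha a))" if "a < n" for a
  proof -
    have "Tab n T \<subseteq> Ga a \<union> Ea a \<union> Ha a"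
      unfolding Ga_def Ea_def Ha_def using es_count_or[OF that] by blast
    then have "card (Tab n T) \<le> card (Ga a \<union> Ea a \<union> Ha a)"
      by (rule card_mono[rotated]) (auto simp: Ga_def Ea_def Ha_def)
    also have "\<dots> \<le> card (Ga a) + card (Ea a) + card (Ha a)"
      by (meson card_Un_le add_right_mono order_trans)
    finally show ?thesis by linarith
  qed
  have Hsum: "(\<Sum>a<n. real (card (Ha a))) \<le> real (card (Tab n T))"
  proof -
    have "(\<Sum>a<n. card (Ha a)) = card (\<Union>a<n. Ha a)"
      by (rule card_UN_disjoint[symmetric]) (auto simp: Ha_def)
    also have "\<dots> \<le> card (Tab n T)" by (rule card_mono) (auto simp: Ha_def)
    finally show ?thesis by (simp flip: of_nat_sum)
  qed
  have "real n * real (card (Tab n T)) \<le> (\<Sum>a<n. real (card (Ga a)) + real (card (Ea a)) + real (card (Ha a)))"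
    using sum_mono[of "{..<n}" "\<lambda>_. real (card (Tab n T))", OF each] by simp
  also have "\<dots> = (\<Sum>a<n. real (card (Ga a))) + (\<Sum>a<n. real (card (Ea a))) + (\<Sum>a<n. real (card (Ha a)))"
    by (simp add: sum.distrib)
  finally have "real n * real (card (Tab n T)) - real (card (Tab n T)) \<le> (\<Sum>a<n. real (card (Ga a))) + (\<Sum>a<n. real (card (Ea a)))"
    using Hsum by linarith
  then have "w0 * (real n * real (card (Tab n T)) - real (card (Tab n T))) \<le> w0 * ((\<Sum>a<n. real (card (Ga a))) + (\<Sum>a<n. real (card (Ea a))))"
    by (rule mult_left_mono) (simp add: w0_def)
  moreover have "w0 * (real n * real (card (Tab n T)) - real (card (Tab n T))) = real n - 1"
    using w0c by (simp add: algebra_simps)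
  ultimately show ?thesis by (simp add: algebra_simps sum_distrib_left)
qed


lemma arm_bound:
  fixes b L \<epsilon> \<delta> :: real and R n a
  assumes b: "0 < b" "b < 1/8" and e: "0 < \<epsilon>" "\<epsilon> < b/4" and L: "L \<ge> 2/b"
    and dL: "\<delta> = exp (-L)" and a: "a < n"
    and hyp: "\<forall>nu. valid_instance n nu \<longrightarrow> success_prob R n nu \<epsilon> \<ge> 1 - \<delta>"
  defines "\<gamma> \<equiv> \<epsilon>*(1+b)"
  defines "u \<equiv> ln (1+2*\<gamma>) - ln (1-2*\<gamma>)"
  defines "v \<equiv> -(ln (1+2*\<gamma>) + ln (1-2*\<gamma>))"
  defines "T \<equiv> nat \<lfloor>2*(1-2*b)*L/v\<rfloor>"
  defines "lam \<equiv> 4*b*L/(real T*u^2)"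
  shows "(1/2::real) ^ card (II n T) * real (card {\<tau>\<in>Tab n T. a \<notin> fst (elim_state R n (ext \<tau>) T)})
          \<le> exp (-(b*L)) + exp (-(b^2*L/9))"
proof -
  note P = param[OF b e L, folded \<gamma>_def, folded u_def v_def, folded T_def, folded lam_def]
  have g1: "\<epsilon> < \<gamma>" and g2: "\<gamma> \<le> 1/4" and g0: "0 < \<gamma>" and l0: "lam > 0"
    and key: "-lam*((1-b)*L) + real T*(lam * v / 2 + (lam*u)^2/8) \<le> -(b^2*L/9)"
    using P by auto
  have g3: "\<gamma> < 1/2" using g2 by linarith
  define Ea where "Ea = {\<tau>\<in>Tab n T. a \<notin> fst (elim_state R n (ext \<tau>) T)}"
  define c where "c = exp ((1-b)*L)"
  have c0: "c > 0" unfolding c_def by simp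
  have Lp: "L > 0" using L b by (smt (verit) divide_pos_pos)
  have d1: "\<delta> < 1" unfolding dL using Lp by simp
  have "success_prob R n (\<lambda>x. bern (pa a \<gamma> x)) \<epsilon> \<ge> 1 - \<delta>"
    using hyp valid_bern[OF pa_range[OF g0 g3], of n] by simp
  then have sb: "(\<Sum>\<tau>\<in>Ea. wt n T (pa a \<gamma>) \<tau>) \<le> \<delta>"
    unfolding Ea_def by (rule succ_bound[OF a e(1) g1 g3 d1])
  have wa: "wt n T (pa a \<gamma>) \<tau> = (1/2) ^ card ({..<n}\<times>{..<T}) * (\<Prod>x\<in>{..<n}\<times>{..<T}. if fst x = a then rr \<gamma> (\<tau> x) else 1)" for \<tau>
    unfolding pa_def using wt_a[of n T a \<gamma> \<tau>] unfolding II_def .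
  have EaT: "Ea \<subseteq> (\<Pi>\<^sub>E x\<in>{..<n}\<times>{..<T}. {0,1})" unfolding Ea_def Tab_def II_def by auto
  have cm: "(\<Sum>\<tau>\<in>Ea. (1/2::real) ^ card ({..<n}\<times>{..<T}))
      \<le> c * \<delta> + c powr (-lam) * (((1+2*\<gamma>) powr (-lam) + (1-2*\<gamma>) powr (-lam))/2) ^ T"
    by (rule change_measure[OF a g0 g3 c0 l0 EaT]) (use sb wa in simp)
  have M: "((1+2*\<gamma>) powr (-lam) + (1-2*\<gamma>) powr (-lam))/2 \<le> exp (lam * v / 2 + (lam*u)^2/8)"
    using M_bound[OF g0 g3 l0] unfolding u_def v_def .
  have cp: "c powr (-lam) = exp (-lam*((1-b)*L))" unfolding c_def powr_def by simp
  have M0: "0 \<le> ((1+2*\<gamma>) powr (-lam) + (1-2*\<gamma>) powr (-lam))/2" by simp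
  have "c powr (-lam) * (((1+2*\<gamma>) powr (-lam) + (1-2*\<gamma>) powr (-lam))/2) ^ T
      \<le> exp (-lam*((1-b)*L)) * exp (lam * v / 2 + (lam*u)^2/8) ^ T"
    unfolding cp using M M0 by (intro mult_left_mono power_mono) auto
  also have "\<dots> = exp (-lam*((1-b)*L) + real T*(lam * v / 2 + (lam*u)^2/8))"
    by (simp only: exp_of_nat_mult[symmetric] exp_add[symmetric])
  also have "\<dots> \<le> exp (-(b^2*L/9))" using key by simp
  finally have t2: "c powr (-lam) * (((1+2*\<gamma>) powr (-lam) + (1-2*\<gamma>) powr (-lam))/2) ^ T \<le> exp (-(b^2*L/9))" .
  have t1: "c * \<delta> = exp (-(b*L))" unfolding c_def dL by (simp add: exp_add[symmetric] algebra_simps)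
  have "(1/2::real) ^ card (II n T) * real (card Ea) = (\<Sum>\<tau>\<in>Ea. (1/2::real) ^ card ({..<n}\<times>{..<T}))"
    by (simp add: II_def)
  also have "\<dots> \<le> exp (-(b*L)) + exp (-(b^2*L/9))" using cm t1 t2 by linarith
  finally show ?thesis unfolding Ea_def .
qed


lemma main_case:
  fixes \<beta> \<epsilon> \<delta> :: real and R n
  assumes \<beta>: "0 < \<beta>" "\<beta> < 1/2"
  defines "b \<equiv> \<beta>/4"
  defines "L0 \<equiv> max (2/b) (9*ln (4/b)/b^2)"
  assumes e: "0 < \<epsilon>" "\<epsilon> < b/4" and d: "0 < \<delta>" "\<delta> < exp (-L0)"
    and hyp: "\<forall>n\<ge>1. \<forall>nu. valid_instance n nu \<longrightarrow> success_prob R n nu \<epsilon> \<ge> 1 - \<delta>"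
    and nb: "real n \<ge> 2/b"
  shows "ennreal ((1/2 - \<beta>) * real n / \<epsilon>^2 * ln (1/\<delta>)) \<le> expected_queries R n (\<lambda>a. bern (1/2))"
proof -
  define L where "L = ln (1/\<delta>)"
  have b: "0 < b" "b < 1/8" unfolding b_def using \<beta> by auto
  have lnd: "ln (1/\<delta>) = - ln \<delta>" using d by (simp add: ln_div)
  have dL: "\<delta> = exp (-L)" unfolding L_def lnd using d by simp
  have "ln \<delta> < ln (exp (-L0))" using d by (subst ln_less_cancel_iff) auto
  then have LL0: "L > L0" unfolding L_def lnd by simp
  have L1: "L \<ge> 2/b" and L2: "L \<ge> 9*ln (4/b)/b^2" using LL0 unfolding L0_def by auto
  have Lp: "L > 0" using L1 b by (smt (verit) divide_pos_pos)
  have ln4: "ln (4/b) > 0" using b by (simp add: field_simps)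
  have "b^2 * L \<ge> 9*ln (4/b)" using L2 b by (simp add: field_simps)
  then have x2: "b^2*L/9 \<ge> ln (4/b)" by simp
  have "b * L \<ge> b^2 * L" using b Lp by (simp add: power2_eq_square mult_right_mono)
  then have x1: "b*L \<ge> ln (4/b)" using x2 ln4 by linarith
  have "exp (-(b*L)) \<le> exp (- ln (4/b))" using x1 by simp
  also have "\<dots> = b/4" using b by (simp add: exp_minus exp_ln)
  finally have y1: "exp (-(b*L)) \<le> b/4" .
  have "exp (-(b^2*L/9)) \<le> exp (- ln (4/b))" using x2 by simp
  also have "\<dots> = b/4" using b by (simp add: exp_minus exp_ln)
  finally have y2: "exp (-(b^2*L/9)) \<le> b/4" .
  define \<gamma> where "\<gamma> = \<epsilon>*(1+b)"
  define u where "u = ln (1+2*\<gamma>) - ln (1-2*\<gamma>)"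
  define v where "v = -(ln (1+2*\<gamma>) + ln (1-2*\<gamma>))"
  define T where "T = nat \<lfloor>2*(1-2*b)*L/v\<rfloor>"
  define w0 where "w0 = (1/2::real) ^ card (II n T)"
  define Ea where "Ea a = {\<tau>\<in>Tab n T. a \<notin> fst (elim_state R n (ext \<tau>) T)}" for a
  define Ga where "Ga a = {\<tau>\<in>Tab n T. snd (elim_state R n (ext \<tau>) T) a = T}" for a
  note P = param[OF b e L1, folded \<gamma>_def, folded u_def v_def, folded T_def]
  have T3: "real T \<ge> (1-6*b)*(L/(2*\<epsilon>^2))" using P by auto
  have n1: "n \<ge> 1"
  proof -
    have "2/b > 0" using b by simp
    then show ?thesis using nb by (cases n) auto
  qed
  have hn: "\<forall>nu. valid_instance n nu \<longrightarrow> success_prob R n nu \<epsilon> \<ge> 1 - \<delta>" using hyp n1 by auto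
  have arm: "w0 * real (card (Ea a)) \<le> b/2" if "a < n" for a
  proof -
    have "w0 * real (card (Ea a)) \<le> exp (-(b*L)) + exp (-(b^2*L/9))"
      using arm_bound[OF b e L1 dL that hn] unfolding w0_def Ea_def T_def v_def \<gamma>_def .
    then show ?thesis using y1 y2 by linarith
  qed
  have Esum: "(\<Sum>a<n. w0 * real (card (Ea a))) \<le> real n * (b/2)"
    using sum_mono[of "{..<n}" "\<lambda>a. w0 * real (card (Ea a))" "\<lambda>_. b/2"] arm by simp
  have cb: "(\<Sum>a<n. w0 * real (card (Ga a))) \<ge> real n - (\<Sum>a<n. w0 * real (card (Ea a))) - 1"
    using comb_bound[where R=R and n=n and T=T] unfolding w0_def Ga_def Ea_def .
  have eb: "ennreal (real T * (\<Sum>a<n. \<Sum>\<tau>\<in>Ga a. wt n T (\<lambda>_. 1/2) \<tau>)) \<le> expected_queries R n (\<lambda>a. bern (1/2))"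
    using expect_bound[where R=R and n=n and T=T] unfolding Ga_def by simp
  have sG: "(\<Sum>\<tau>\<in>Ga a. wt n T (\<lambda>_. 1/2) \<tau>) = w0 * real (card (Ga a))" for a
    unfolding wt_half w0_def by simp
  define A where "A = L/(2*\<epsilon>^2)"
  have A0: "A > 0" unfolding A_def using Lp e by simp
  have lhs: "(1/2 - \<beta>) * real n / \<epsilon>^2 * ln (1/\<delta>) = (1-8*b) * real n * A"
    unfolding A_def b_def L_def[symmetric] using e by (simp add: field_simps)
  have nbb: "real n * b / 2 \<ge> 1" using nb b by (simp add: field_simps)
  have S: "(\<Sum>a<n. w0 * real (card (Ga a))) \<ge> real n - real n * (b/2) - 1" using cb Esum by linarith
  have S0: "real n - real n * (b/2) - 1 \<ge> real n * (1 - b)" using nbb by (simp add: algebra_simps)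
  have "(1-8*b) * real n * A \<le> (1-6*b)*(1-b) * real n * A"
  proof -
    have "(1-8*b) \<le> (1-6*b)*(1-b)" using b by (simp add: algebra_simps)
    then show ?thesis using A0 by (intro mult_right_mono) auto
  qed
  also have "\<dots> = ((1-6*b)*A) * (real n * (1 - b))" by (simp add: algebra_simps)
  also have "\<dots> \<le> real T * (real n * (1 - b))"
    using T3 b unfolding A_def by (intro mult_right_mono) auto
  also have "\<dots> \<le> real T * (\<Sum>a<n. w0 * real (card (Ga a)))"
    using S S0 by (intro mult_left_mono) auto
  finally have fin: "(1/2 - \<beta>) * real n / \<epsilon>^2 * ln (1/\<delta>) \<le> real T * (\<Sum>a<n. \<Sum>\<tau>\<in>Ga a. wt n T (\<lambda>_. 1/2) \<tau>)"
    unfolding lhs sG .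
  show ?thesis using ennreal_leI[OF fin] eb by (rule order_trans)
qed

theorem theorem4:
  fixes \<beta> :: real
  assumes "\<beta> > 0"
  shows "\<exists>\<epsilon>0>0. \<exists>\<delta>0>0. \<forall>(R::elim_rule) (\<epsilon>::real) (\<delta>::real).
           0 < \<epsilon> \<longrightarrow> \<epsilon> < \<epsilon>0 \<longrightarrow> 0 < \<delta> \<longrightarrow> \<delta> < \<delta>0 \<longrightarrow>
           (\<forall>n\<ge>1. \<forall>nu. valid_instance n nu \<longrightarrow> success_prob R n nu \<epsilon> \<ge> 1 - \<delta>) \<longrightarrow>
           (\<exists>n0. \<forall>n>n0. \<exists>nu. valid_instance n nu \<and>
              ennreal ((1/2 - \<beta>) * real n / \<epsilon>^2 * ln (1/\<delta>)) \<le> expected_queries R n nu)"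
proof (cases "\<beta> < 1/2")
  case False
  show ?thesis
  proof (intro exI[of _ "1::real"] conjI allI impI)
    show "(0::real) < 1" by simp
    show "(0::real) < 1" by simp
    fix R :: elim_rule and \<epsilon> \<delta> :: real
    assume H: "0 < \<epsilon>" "\<epsilon> < 1" "0 < \<delta>" "\<delta> < 1"
      and hyp: "\<forall>n\<ge>1. \<forall>nu. valid_instance n nu \<longrightarrow> success_prob R n nu \<epsilon> \<ge> 1 - \<delta>"
    show "\<exists>n0. \<forall>n>n0. \<exists>nu. valid_instance n nu \<and>
              ennreal ((1/2 - \<beta>) * real n / \<epsilon>^2 * ln (1/\<delta>)) \<le> expected_queries R n nu"
    proof (intro exI[of _ "0::nat"] allI impI)
      fix n :: nat assume "n > 0"
      have v: "valid_instance n (\<lambda>a. bern ((\<lambda>_. 1/2) a))" by (rule valid_bern) simp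
      have "ln (1/\<delta>) \<ge> 0" using H by simp
      moreover have "(1/2 - \<beta>) * real n / \<epsilon>^2 \<le> 0" using False H
        by (intro divide_nonpos_pos mult_nonpos_nonneg) auto
      ultimately have "(1/2 - \<beta>) * real n / \<epsilon>^2 * ln (1/\<delta>) \<le> 0"
        by (rule mult_nonpos_nonneg[rotated])
      then have "ennreal ((1/2 - \<beta>) * real n / \<epsilon>^2 * ln (1/\<delta>)) = 0" by (simp add: ennreal_eq_0_iff)
      then show "\<exists>nu. valid_instance n nu \<and>
              ennreal ((1/2 - \<beta>) * real n / \<epsilon>^2 * ln (1/\<delta>)) \<le> expected_queries R n nu"
        using v by auto
    qed
  qed
next
  case True
  define b where "b = \<beta>/4"
  define L0 where "L0 = max (2/b) (9*ln (4/b)/b^2)"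
  have b0: "b > 0" unfolding b_def using assms by simp
  show ?thesis
  proof (rule exI[of _ "b/4"], rule conjI)
    show "b/4 > 0" using b0 by simp
  next
  show "\<exists>\<delta>0>0. \<forall>(R::elim_rule) (\<epsilon>::real) (\<delta>::real).
           0 < \<epsilon> \<longrightarrow> \<epsilon> < b/4 \<longrightarrow> 0 < \<delta> \<longrightarrow> \<delta> < \<delta>0 \<longrightarrow>
           (\<forall>n\<ge>1. \<forall>nu. valid_instance n nu \<longrightarrow> success_prob R n nu \<epsilon> \<ge> 1 - \<delta>) \<longrightarrow>
           (\<exists>n0. \<forall>n>n0. \<exists>nu. valid_instance n nu \<and>
              ennreal ((1/2 - \<beta>) * real n / \<epsilon>^2 * ln (1/\<delta>)) \<le> expected_queries R n nu)"
  proof (rule exI[of _ "exp (-L0)"], rule conjI)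
    show "exp (-L0) > 0" by simp
  next
  show "\<forall>(R::elim_rule) (\<epsilon>::real) (\<delta>::real).
           0 < \<epsilon> \<longrightarrow> \<epsilon> < b/4 \<longrightarrow> 0 < \<delta> \<longrightarrow> \<delta> < exp (-L0) \<longrightarrow>
           (\<forall>n\<ge>1. \<forall>nu. valid_instance n nu \<longrightarrow> success_prob R n nu \<epsilon> \<ge> 1 - \<delta>) \<longrightarrow>
           (\<exists>n0. \<forall>n>n0. \<exists>nu. valid_instance n nu \<and>
              ennreal ((1/2 - \<beta>) * real n / \<epsilon>^2 * ln (1/\<delta>)) \<le> expected_queries R n nu)"
  proof (intro allI impI)
    fix R :: elim_rule and \<epsilon> \<delta> :: real
    assume H: "0 < \<epsilon>" "\<epsilon> < b/4" "0 < \<delta>" "\<delta> < exp (-L0)"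
      and hyp: "\<forall>n\<ge>1. \<forall>nu. valid_instance n nu \<longrightarrow> success_prob R n nu \<epsilon> \<ge> 1 - \<delta>"
    show "\<exists>n0. \<forall>n>n0. \<exists>nu. valid_instance n nu \<and>
              ennreal ((1/2 - \<beta>) * real n / \<epsilon>^2 * ln (1/\<delta>)) \<le> expected_queries R n nu"
    proof (intro exI[of _ "nat \<lceil>2/b\<rceil>"] allI impI)
      fix n :: nat assume "n > nat \<lceil>2/b\<rceil>"
      then have nb: "real n \<ge> 2/b" by linarith
      have v: "valid_instance n (\<lambda>a. bern ((\<lambda>_. 1/2) a))" by (rule valid_bern) simp
      have "ennreal ((1/2 - \<beta>) * real n / \<epsilon>^2 * ln (1/\<delta>)) \<le> expected_queries R n (\<lambda>a. bern (1/2))"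
        using main_case[OF assms True, folded b_def, folded L0_def, OF H hyp nb] .
      then show "\<exists>nu. valid_instance n nu \<and>
              ennreal ((1/2 - \<beta>) * real n / \<epsilon>^2 * ln (1/\<delta>)) \<le> expected_queries R n nu"
        using v by auto
    qed
  qed
  qed
  qed
qed


end
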